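(* For $\omega_T>0$ let $u^{*,\omega_T}$ be the optimal strategy of $$\max_{\text{admissible }u}\ \mathbb{E}(x_T)-\omega_T\mathrm{Var}(x_T)$$ given by $$u_t^{*,\omega_T}=-s_tK_t\,x_t+K_t\Big[x_0\prod_{k=0}^{T-1}s_k+\frac{1}{2\omega_T\prod_{k=0}^{T-1}(1-B_k)}\Big]\prod_{k=t+1}^{T-1}s_k^{-1}.$$ Write $\Pi=\prod_{k=0}^{T-1}(1-B_k)$. Then the terminal wealth $x_T$ under $u^{*,\omega_T}$ satisfies $$\mathrm{Var}(x_T)=\frac{\Pi}{1-\Pi}\Big(\mathbb{E}(x_T)-x_0\prod_{k=0}^{T-1}s_k\Big)^2,\qquad \mathbb{E}(x_T)>x_0\prod_{k=0}^{T-1}s_k .$$ Moreover, as $\omega_T$ ranges over $(0,\infty)$, the value $\mathbb{E}(x_T)$ ranges over all of $\big(x_0\prod_{k=0}^{T-1}s_k,\infty\big)$.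
   Context: Market model. Fix integers $T\ge1$ and $n\ge1$. For $t=0,\dots,T-1$ the following are given: - a deterministic riskless gross return $s_t>1$; - a random excess-return vector $P_t\in\mathbb{R}^n$. The vectors $P_0,\dots,P_{T-1}$ are independent and square integrable. Write $M_t=\mathbb{E}(P_tP_t')$ and $m_t=\mathbb{E}(P_t)$, and assume $M_t$ is positive definite. Set $$B_t=m_t'M_t^{-1}m_t,\qquad K_t=M_t^{-1}m_t,$$ and assume $0<B_t<1$ for all $t$. Wealth and strategies. The initial wealth $x_0\in\mathbb{R}$ is deterministic, and $x_{t+1}=s_tx_t+P_t'u_t$. A strategy is admissible if each $u_t\in\mathbb{R}^n$ is square integrable and $\sigma(P_0,\dots,P_{t-1})$-measurable. Conventions: an empty product equals $1$. *)

theory Defs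
  imports "HOL-Probability.Probability"
begin

definition second_moment :: "'a measure \<Rightarrow> ('a \<Rightarrow> real^'n) \<Rightarrow> real^'n^'n" where
  "second_moment M X = (\<chi> i j. integral\<^sup>L M (\<lambda>w. X w $ i * X w $ j))"

definition mean_vec :: "'a measure \<Rightarrow> ('a \<Rightarrow> real^'n) \<Rightarrow> real^'n" where
  "mean_vec M X = (\<chi> i. integral\<^sup>L M (\<lambda>w. X w $ i))"

definition Kvec :: "'a measure \<Rightarrow> ('a \<Rightarrow> real^'n) \<Rightarrow> real^'n" where
  "Kvec M X = matrix_inv (second_moment M X) *v mean_vec M X"

definition Bval :: "'a measure \<Rightarrow> ('a \<Rightarrow> real^'n) \<Rightarrow> real" where
  "Bval M X = mean_vec M X \<bullet> (matrix_inv (second_moment M X) *v mean_vec M X)"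

definition pos_def_mat :: "real^'n^'n \<Rightarrow> bool" where
  "pos_def_mat A \<longleftrightarrow> (\<forall>x. x \<noteq> 0 \<longrightarrow> 0 < x \<bullet> (A *v x))"

primrec wealth :: "(nat \<Rightarrow> real) \<Rightarrow> (nat \<Rightarrow> 'a \<Rightarrow> real^'n) \<Rightarrow> (nat \<Rightarrow> real \<Rightarrow> real^'n)
    \<Rightarrow> real \<Rightarrow> nat \<Rightarrow> 'a \<Rightarrow> real" where
  "wealth s P u x0 0 w = x0"
| "wealth s P u x0 (Suc t) w =
     s t * wealth s P u x0 t w + P t w \<bullet> u t (wealth s P u x0 t w)"

definition opt_strategy :: "'a measure \<Rightarrow> (nat \<Rightarrow> real) \<Rightarrow> (nat \<Rightarrow> 'a \<Rightarrow> real^'n)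
    \<Rightarrow> real \<Rightarrow> nat \<Rightarrow> real \<Rightarrow> nat \<Rightarrow> real \<Rightarrow> real^'n" where
  "opt_strategy M s P x0 T \<omega>T t x =
     (- (s t * x)) *\<^sub>R Kvec M (P t)
     + ((x0 * (\<Prod>k<T. s k) + 1 / (2 * \<omega>T * (\<Prod>k<T. 1 - Bval M (P k))))
         * (\<Prod>k\<in>{Suc t..<T}. inverse (s k))) *\<^sub>R Kvec M (P t)"

end

theory Submission imports Defs begin

lemma vec_meas: "(f::'a \<Rightarrow> real^'n) \<in> borel_measurable M \<Longrightarrow> (\<lambda>w. f w $ i) \<in> borel_measurable M"
  using borel_measurable_nth measurable_compose by blast

lemma posdef_inv:
  fixes A :: "real^'n^'n"
  assumes "pos_def_mat A"
  shows "A *v (matrix_inv A *v m) = m"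
proof -
  have "\<forall>x. A *v x = 0 \<longrightarrow> x = 0"
  proof (intro allI impI, rule ccontr)
    fix x assume "A *v x = 0" "x \<noteq> 0"
    then show False using assms unfolding pos_def_mat_def by force
  qed
  then have "\<exists>B. B ** A = mat 1" using matrix_left_invertible_ker by blast
  then have "invertible A" using invertible_left_inverse by blast
  then have "A ** matrix_inv A = mat 1 \<and> matrix_inv A ** A = mat 1"
    unfolding matrix_inv_def invertible_def by (rule someI_ex)
  then show ?thesis by (simp add: matrix_vector_mul_assoc)
qed

lemma abs_mult_le_sq: "\<bar>(a::real) * b\<bar> \<le> a^2 + b^2"
proof -
  have "0 \<le> (\<bar>a\<bar> - \<bar>b\<bar>)^2" by simp
  then have "2 * (\<bar>a\<bar> * \<bar>b\<bar>) \<le> a^2 + b^2" by (simp add: power2_eq_square algebra_simps)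
  moreover have "0 \<le> \<bar>a\<bar> * \<bar>b\<bar>" by simp
  ultimately have "\<bar>a\<bar> * \<bar>b\<bar> \<le> a^2 + b^2" by linarith
  then show ?thesis by (simp add: abs_mult)
qed

lemma integrable_mult_sq:
  fixes f g :: "'a \<Rightarrow> real"
  assumes "f \<in> borel_measurable M" "g \<in> borel_measurable M"
    "integrable M (\<lambda>w. (f w)^2)" "integrable M (\<lambda>w. (g w)^2)"
  shows "integrable M (\<lambda>w. f w * g w)"
proof -
  have i: "integrable M (\<lambda>w. (f w)^2 + (g w)^2)" using assms by simp
  have m: "(\<lambda>w. f w * g w) \<in> borel_measurable M" using assms by simp
  have "AE x in M. norm (f x * g x) \<le> norm ((f x)^2 + (g x)^2)"
  proof (rule AE_I2)
    fix x
    have "\<bar>f x * g x\<bar> \<le> (f x)^2 + (g x)^2" by (rule abs_mult_le_sq)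
    then show "norm (f x * g x) \<le> norm ((f x)^2 + (g x)^2)" by simp
  qed
  then show ?thesis using Bochner_Integration.integrable_bound[OF i m] by blast
qed

lemma moments:
  fixes X :: "'a \<Rightarrow> real^'n" and M :: "'a measure"
  assumes P: "prob_space M" and meas: "X \<in> borel_measurable M"
    and sq: "\<And>i. integrable M (\<lambda>w. (X w $ i)^2)" and pd: "pos_def_mat (second_moment M X)"
  shows "integrable M (\<lambda>w. 1 - X w \<bullet> Kvec M X)"
    "integral\<^sup>L M (\<lambda>w. 1 - X w \<bullet> Kvec M X) = 1 - Bval M X"
    "integrable M (\<lambda>w. (1 - X w \<bullet> Kvec M X)^2)"
    "integral\<^sup>L M (\<lambda>w. (1 - X w \<bullet> Kvec M X)^2) = 1 - Bval M X"
proof -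
  interpret prob_space M by (rule P)
  define c where "c = Kvec M X"
  define m where "m = mean_vec M X"
  define A where "A = second_moment M X"
  have cm: "A *v c = m" unfolding A_def c_def m_def Kvec_def using posdef_inv[OF pd] .
  have B: "Bval M X = m \<bullet> c" unfolding Bval_def Kvec_def c_def m_def ..
  have cmeas: "\<And>i. (\<lambda>w. X w $ i) \<in> borel_measurable M" using vec_meas[OF meas] .
  have int1: "\<And>i. integrable M (\<lambda>w. X w $ i)"
    by (rule square_integrable_imp_integrable[OF cmeas sq])
  have int2: "\<And>i j. integrable M (\<lambda>w. X w $ i * X w $ j)"
    by (rule integrable_mult_sq[OF cmeas cmeas sq sq])
  have eq1: "\<And>w. X w \<bullet> c = (\<Sum>i\<in>UNIV. c$i * X w $ i)"
    by (simp add: inner_vec_def mult.commute)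
  have eq2: "\<And>w. (X w \<bullet> c)^2 = (\<Sum>i\<in>UNIV. \<Sum>j\<in>UNIV. (c$i * c$j) * (X w $ i * X w $ j))"
    by (simp add: eq1 power2_eq_square sum_product ac_simps)
  have I1: "integrable M (\<lambda>w. X w \<bullet> c)"
    by (simp only: eq1) (auto intro!: integrable_sum integrable_mult_right int1)
  have E1: "integral\<^sup>L M (\<lambda>w. X w \<bullet> c) = Bval M X"
    by (simp only: eq1 B) (simp add: integral_sum int1 mean_vec_def m_def inner_vec_def mult.commute)
  have I2: "integrable M (\<lambda>w. (X w \<bullet> c)^2)"
    by (simp only: eq2) (auto intro!: integrable_sum integrable_mult_right int2)
  have "integral\<^sup>L M (\<lambda>w. (X w \<bullet> c)^2) = (\<Sum>i\<in>UNIV. \<Sum>j\<in>UNIV. (c$i * c$j) * A$i$j)"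
    by (simp only: eq2) (simp add: integral_sum int2 integrable_sum A_def second_moment_def)
  also have "\<dots> = c \<bullet> (A *v c)"
    by (simp add: inner_vec_def matrix_vector_mult_def sum_distrib_left ac_simps)
  also have "\<dots> = Bval M X" using cm B by (simp add: inner_commute)
  finally have E2: "integral\<^sup>L M (\<lambda>w. (X w \<bullet> c)^2) = Bval M X" .
  have eq3: "\<And>w. (1 - X w \<bullet> c)^2 = 1 - 2 * (X w \<bullet> c) + (X w \<bullet> c)^2"
    by (simp add: power2_eq_square algebra_simps)
  show "integrable M (\<lambda>w. 1 - X w \<bullet> Kvec M X)"
    using I1 unfolding c_def by simp
  show "integral\<^sup>L M (\<lambda>w. 1 - X w \<bullet> Kvec M X) = 1 - Bval M X"
    using I1 E1 unfolding c_def by (simp add: prob_space)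
  show "integrable M (\<lambda>w. (1 - X w \<bullet> Kvec M X)^2)"
    using I1 I2 unfolding c_def[symmetric] eq3 by simp
  show "integral\<^sup>L M (\<lambda>w. (1 - X w \<bullet> Kvec M X)^2) = 1 - Bval M X"
    using I1 I2 E1 E2 unfolding c_def[symmetric] eq3 by (simp add: prob_space)
qed

lemma wealth_closed:
  fixes s :: "nat \<Rightarrow> real" and P :: "nat \<Rightarrow> 'a \<Rightarrow> real^'n"
  assumes nz: "\<And>t. t < T \<Longrightarrow> s t \<noteq> 0"
  shows "t \<le> T \<Longrightarrow> wealth s P (opt_strategy M s P x0 T \<omega>) x0 t w
     = (x0 * (\<Prod>k<T. s k) + 1 / (2 * \<omega> * (\<Prod>k<T. 1 - Bval M (P k)))) / (\<Prod>k\<in>{t..<T}. s k)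
       + (x0 - (x0 * (\<Prod>k<T. s k) + 1 / (2 * \<omega> * (\<Prod>k<T. 1 - Bval M (P k)))) / (\<Prod>k<T. s k))
         * (\<Prod>k<t. s k * (1 - P k w \<bullet> Kvec M (P k)))"
proof (induction t)
  case 0
  then show ?case by (simp add: atLeast0LessThan)
next
  case (Suc t)
  define g where "g = x0 * (\<Prod>k<T. s k) + 1 / (2 * \<omega> * (\<Prod>k<T. 1 - Bval M (P k)))"
  define D where "D = x0 - g / (\<Prod>k<T. s k)"
  define Q where "Q = (\<Prod>k\<in>{Suc t..<T}. s k)"
  define R where "R = (\<Prod>k<t. s k * (1 - P k w \<bullet> Kvec M (P k)))"
  define p where "p = P t w \<bullet> Kvec M (P t)"
  define X where "X = wealth s P (opt_strategy M s P x0 T \<omega>) x0 t w"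
  have tT: "t < T" using Suc.prems by simp
  have st: "s t \<noteq> 0" using nz tT by simp
  have Q: "Q \<noteq> 0" unfolding Q_def using nz by (auto simp: prod_zero_iff)
  have Qt: "(\<Prod>k\<in>{t..<T}. s k) = s t * Q" unfolding Q_def using tT by (simp add: prod.atLeast_Suc_lessThan)
  have IH: "X = g / (s t * Q) + D * R"
    using Suc.IH Suc.prems unfolding X_def g_def D_def R_def Qt by simp
  have inv: "(\<Prod>k\<in>{Suc t..<T}. inverse (s k)) = inverse Q" unfolding Q_def using prod_inversef[of s] by (simp add: comp_def)
  have "wealth s P (opt_strategy M s P x0 T \<omega>) x0 (Suc t) w
      = s t * X + (- (s t * X)) * p + (g * inverse Q) * p"
    by (simp add: X_def opt_strategy_def inner_add_right inner_diff_right inv g_def p_def)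
  also have "\<dots> = g / Q + D * (R * (s t * (1 - p)))"
    using st Q unfolding IH by (simp add: field_simps)
  finally show ?case unfolding g_def[symmetric] D_def[symmetric] Q_def[symmetric]
    by (simp add: R_def p_def)
qed

theorem mainTheorem3:
  fixes M :: "'a measure" and P :: "nat \<Rightarrow> 'a \<Rightarrow> real^'n"
    and s :: "nat \<Rightarrow> real" and x0 :: real and T :: nat
  assumes "prob_space M"
    and "T \<ge> 1"
    and "\<And>t. t < T \<Longrightarrow> s t > 1"
    and "\<And>t. t < T \<Longrightarrow> P t \<in> borel_measurable M"
    and "\<And>t i. t < T \<Longrightarrow> integrable M (\<lambda>w. (P t w $ i)\<^sup>2)"
    and "prob_space.indep_vars M (\<lambda>_. borel) P {..<T}"
    and "\<And>t. t < T \<Longrightarrow> pos_def_mat (second_moment M (P t))"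
    and "\<And>t. t < T \<Longrightarrow> 0 < Bval M (P t) \<and> Bval M (P t) < 1"
  shows "(\<forall>\<omega>T>0.
            let xT = wealth s P (opt_strategy M s P x0 T \<omega>T) x0 T;
                PiB = (\<Prod>k<T. 1 - Bval M (P k))
            in prob_space.variance M xT
                 = PiB / (1 - PiB) * (integral\<^sup>L M xT - x0 * (\<Prod>k<T. s k))\<^sup>2
               \<and> integral\<^sup>L M xT > x0 * (\<Prod>k<T. s k))
       \<and> (\<lambda>\<omega>T. integral\<^sup>L M (wealth s P (opt_strategy M s P x0 T \<omega>T) x0 T)) ` {0<..}
           = {x0 * (\<Prod>k<T. s k)<..}"
proof -
  interpret prob_space M by (rule assms(1))
  define S where "S = (\<Prod>k<T. s k)"
  define PB where "PB = (\<Prod>k<T. 1 - Bval M (P k))"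
  define f where "f = (\<lambda>k w. 1 - P k w \<bullet> Kvec M (P k))"
  define Z where "Z = (\<lambda>w. \<Prod>k<T. f k w)"
  have nz: "\<And>t. t<T \<Longrightarrow> s t \<noteq> 0" using assms(3) by force
  have S0: "S \<noteq> 0" unfolding S_def using nz by (auto simp: prod_zero_iff)
  have PB_pos: "0 < PB" unfolding PB_def using assms(8) by (auto intro!: prod_pos)
  have PB_lt: "PB < 1"
  proof -
    have 0: "0 \<in> {..<T}" using assms(2) by simp
    have "PB = (1 - Bval M (P 0)) * (\<Prod>k\<in>{..<T}-{0}. 1 - Bval M (P k))"
      unfolding PB_def using prod.remove[OF _ 0, of "\<lambda>k. 1 - Bval M (P k)"] by simp
    moreover have "(\<Prod>k\<in>{..<T}-{0}. 1 - Bval M (P k)) \<le> 1"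
      by (rule prod_le_1) (use assms(8) in force)+
    moreover have "0 < 1 - Bval M (P 0)" "1 - Bval M (P 0) < 1" using assms(8)[OF 0[simplified]] by auto
    ultimately show ?thesis
      by (metis mult_le_cancel_left2 less_le_not_le order_le_less_trans less_eq_real_def)
  qed
  note mom = moments[OF assms(1) assms(4) assms(5) assms(7)]
  have indep: "indep_vars (\<lambda>_. borel) f {..<T}"
    unfolding f_def
    by (rule indep_vars_compose2[OF assms(6), where Y="\<lambda>k v. 1 - v \<bullet> Kvec M (P k)" and N="\<lambda>_. borel", simplified]) measurable
  have indep2: "indep_vars (\<lambda>_. borel) (\<lambda>k w. (f k w)^2) {..<T}"
    unfolding f_def
    by (rule indep_vars_compose2[OF assms(6), where Y="\<lambda>k v. (1 - v \<bullet> Kvec M (P k))^2" and N="\<lambda>_. borel", simplified]) measurable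
  have IZ: "integrable M Z" unfolding Z_def
    by (rule indep_vars_integrable[OF _ indep]) (auto simp: f_def mom)
  have EZ: "integral\<^sup>L M Z = PB" unfolding Z_def PB_def
    by (subst indep_vars_lebesgue_integral[OF _ indep]) (auto simp: f_def mom intro!: prod.cong)
  have Z2: "(\<lambda>w. (Z w)^2) = (\<lambda>w. \<Prod>k<T. (f k w)^2)" unfolding Z_def by (simp add: prod_power_distrib)
  have IZ2: "integrable M (\<lambda>w. (Z w)^2)" unfolding Z2
    by (rule indep_vars_integrable[OF _ indep2]) (auto simp: f_def mom)
  have EZ2: "integral\<^sup>L M (\<lambda>w. (Z w)^2) = PB" unfolding Z2 PB_def
    by (subst indep_vars_lebesgue_integral[OF _ indep2]) (auto simp: f_def mom intro!: prod.cong)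
  have xT: "wealth s P (opt_strategy M s P x0 T \<omega>) x0 T = (\<lambda>w. (x0*S + 1/(2*\<omega>*PB)) - 1/(2*\<omega>*PB) * Z w)" for \<omega>
  proof
    fix w
    define a where "a = 1/(2*\<omega>*PB)"
    have prd: "(\<Prod>k<T. s k * (1 - P k w \<bullet> Kvec M (P k))) = S * Z w"
      unfolding S_def Z_def f_def by (simp add: prod.distrib)
    have wc0: "wealth s P (opt_strategy M s P x0 T \<omega>) x0 T w = (x0*S + a) + (x0 - (x0*S + a)/S) * (\<Prod>k<T. s k * (1 - P k w \<bullet> Kvec M (P k)))"
      unfolding S_def PB_def a_def by (simp add: wealth_closed[OF nz order_refl])
    have wc: "wealth s P (opt_strategy M s P x0 T \<omega>) x0 T w = (x0*S + a) + (x0 - (x0*S + a)/S) * (S * Z w)"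
      using wc0 prd by simp
    have e1: "(x0 - (x0*S + a)/S) * S = - a" using S0 by (simp add: field_simps)
    have "(x0 - (x0*S + a)/S) * (S * Z w) = - a * Z w"
      by (metis e1 mult.assoc)
    then show "wealth s P (opt_strategy M s P x0 T \<omega>) x0 T w = (x0*S + 1/(2*\<omega>*PB)) - 1/(2*\<omega>*PB) * Z w"
      unfolding wc a_def by simp
  qed
  have E: "integral\<^sup>L M (wealth s P (opt_strategy M s P x0 T \<omega>) x0 T) = x0*S + 1/(2*\<omega>*PB) * (1 - PB)" for \<omega>
  proof -
    define a where "a = 1/(2*\<omega>*PB)"
    have "integral\<^sup>L M (\<lambda>w. (x0*S + a) - a * Z w) = (x0*S + a) - a * PB"
      using IZ EZ by (simp add: prob_space)
    also have "\<dots> = x0*S + a * (1 - PB)" by (simp add: algebra_simps)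
    finally show ?thesis unfolding xT a_def .
  qed
  have V: "variance (wealth s P (opt_strategy M s P x0 T \<omega>) x0 T) = (1/(2*\<omega>*PB))^2 * (PB - PB^2)" for \<omega>
  proof -
    define a where "a = 1/(2*\<omega>*PB)"
    have eq: "\<And>w. (x0*S + a - a * Z w - (x0*S + a * (1 - PB)))^2 = a^2*PB^2 - (2*a^2*PB) * Z w + a^2 * (Z w)^2"
      by (simp add: power2_eq_square algebra_simps)
    have "variance (wealth s P (opt_strategy M s P x0 T \<omega>) x0 T)
        = integral\<^sup>L M (\<lambda>w. (x0*S + a - a * Z w - (x0*S + a * (1 - PB)))^2)"
      unfolding E unfolding xT a_def ..
    also have "\<dots> = integral\<^sup>L M (\<lambda>w. a^2*PB^2 - (2*a^2*PB) * Z w + a^2 * (Z w)^2)"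
      unfolding eq ..
    also have "\<dots> = a^2*PB^2 - (2*a^2*PB) * PB + a^2 * PB"
      using IZ IZ2 EZ EZ2 by (simp add: prob_space)
    also have "\<dots> = a^2 * (PB - PB^2)" by (simp add: power2_eq_square algebra_simps)
    finally show ?thesis unfolding a_def .
  qed
  show ?thesis
  proof (intro conjI allI impI)
    fix \<omega> :: real assume w: "\<omega> > 0"
    define a where "a = 1/(2*\<omega>*PB)"
    have a: "a > 0" unfolding a_def using w PB_pos by simp
    have d: "1 - PB \<noteq> 0" using PB_lt by simp
    have k1: "PB / (1 - PB) * (x0 * S + a * (1 - PB) - x0 * S)\<^sup>2 = a\<^sup>2 * (PB - PB\<^sup>2)"
    proof -
      have "x0 * S + a * (1 - PB) - x0 * S = a * (1 - PB)" by simp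
      then have "PB / (1 - PB) * (x0 * S + a * (1 - PB) - x0 * S)\<^sup>2 = PB / (1 - PB) * (1 - PB) * (a^2 * (1 - PB))"
        by (simp add: power2_eq_square)
      also have "\<dots> = PB * (a^2 * (1 - PB))" using d by simp
      also have "\<dots> = a\<^sup>2 * (PB - PB\<^sup>2)" by (simp add: power2_eq_square algebra_simps)
      finally show ?thesis .
    qed
    have k2: "x0 * S < x0 * S + a * (1 - PB)" using a PB_lt by simp
    show "let xT = wealth s P (opt_strategy M s P x0 T \<omega>) x0 T; PiB = \<Prod>k<T. 1 - Bval M (P k)
          in variance xT = PiB / (1 - PiB) * (integral\<^sup>L M xT - x0 * prod s {..<T})\<^sup>2 \<and>
             x0 * prod s {..<T} < integral\<^sup>L M xT"
      unfolding Let_def PB_def[symmetric] S_def[symmetric] V unfolding E a_def[symmetric]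
      using k1 k2 by simp
  next
    show "(\<lambda>\<omega>T. integral\<^sup>L M (wealth s P (opt_strategy M s P x0 T \<omega>T) x0 T)) ` {0<..} = {x0 * prod s {..<T}<..}"
      unfolding S_def[symmetric] E
    proof (intro set_eqI iffI)
      fix y assume "y \<in> (\<lambda>\<omega>. x0 * S + 1 / (2 * \<omega> * PB) * (1 - PB)) ` {0<..}"
      then obtain \<omega> where w: "\<omega> \<in> {0<..}" and y: "y = x0 * S + 1 / (2 * \<omega> * PB) * (1 - PB)"
        by (rule imageE)
      have "0 < 2 * \<omega> * PB" using w PB_pos by simp
      then have p1: "0 < 1 / (2 * \<omega> * PB)" by simp
      have p2: "0 < 1 - PB" using PB_lt by simp
      have "1 / (2 * \<omega> * PB) * (1 - PB) > 0" using p1 p2 by (rule mult_pos_pos)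
      then show "y \<in> {x0 * S<..}" using y by simp
    next
      fix y assume "y \<in> {x0 * S<..}"
      then have y: "y - x0 * S > 0" by simp
      define c where "c = y - x0 * S"
      have c: "c > 0" using y c_def by simp
      define \<omega> where "\<omega> = (1 - PB) / (2 * PB * c)"
      have p2: "0 < 1 - PB" using PB_lt by simp
      have "0 < 2 * PB * c" using PB_pos c by simp
      then have w: "\<omega> > 0" unfolding \<omega>_def using p2 by (rule divide_pos_pos[rotated])
      have h1: "2 * \<omega> * PB = (1 - PB) / c"
        unfolding \<omega>_def using PB_pos c by (simp add: field_simps)
      have "1 / (2 * \<omega> * PB) * (1 - PB) = c"
        unfolding h1 using c p2 by simp
      then have eqy: "x0 * S + 1 / (2 * \<omega> * PB) * (1 - PB) = y" unfolding c_def by simp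
      have mem: "\<omega> \<in> {0<..}" using w by simp
      show "y \<in> (\<lambda>\<omega>. x0 * S + 1 / (2 * \<omega> * PB) * (1 - PB)) ` {0<..}"
        by (rule rev_image_eqI[where f="\<lambda>\<omega>. x0 * S + 1 / (2 * \<omega> * PB) * (1 - PB)", OF mem eqy[symmetric]])
    qed
  qed
qed

end
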